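(* Consider the algorithm described in the context (with $n$ elements, $m$ rows, constants $\epsilon>0$, $0\le\delta\le1-\epsilon$, and an arbitrary possibly adaptive player). With probability at least $1-O(n^{-2})$, after $T=\frac{6}{\epsilon\gamma^2}n\log n$ steps there are no alive elements left.
   Context: Algorithm: $\gamma=\frac{1}{n^{10}m^4\log(mn)}$. Fractional colors start at $x_0(i)=0$; element $i$ is alive at the beginning of step $t$ if $|x_{t-1}(i)|<1-1/n$, and $N(t)$ is the set of alive elements. At each step $t=1,\dots,T$ while $N(t)\ne\emptyset$, a player chooses a nonempty $A(t)\subseteq N(t)$ and at most $\delta|A(t)|$ vectors $w_k\in\mathbb{R}^{A(t)}$; the algorithm computes vectors $u_i^t$ ($i\in A(t)$) with $\sum_i w_k(i)u_i^t=0$ for each $k$, $\|\sum_i b(i)u_i^t\|_2^2\le\frac1\beta\sum_i b(i)^2\|u_i^t\|_2^2$ for all $b$, $\|u_i^t\|_2\le1$ and $\sum_i\|u_i^t\|_2^2\ge(1-\delta-\beta)|A(t)|$ where $\beta=(1-\delta)/2$; it draws a uniformly random sign vector $r_t$ and updates $x_t(i)=x_{t-1}(i)+\gamma\langle r_t,u_i^t\rangle$ for $i\in A(t)$, leaving other coordinates unchanged. *)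

theory Defs
  imports "HOL-Probability.Probability"
begin

definition step_size :: "nat \<Rightarrow> nat \<Rightarrow> real" where
  "step_size n m = 1 / (real n ^ 10 * real m ^ 4 * ln (real m * real n))"

definition num_steps :: "real \<Rightarrow> nat \<Rightarrow> nat \<Rightarrow> nat" where
  "num_steps \<epsilon> n m = nat \<lceil>6 / (\<epsilon> * (step_size n m)\<^sup>2) * real n * ln (real n)\<rceil>"

text \<open>Sequences of T uniformly random sign vectors r_0,...,r_(T-1) in {-1,1}^d;
  r t j is coordinate j of the sign vector used at (0-indexed) step t.\<close>
definition sign_seqs :: "nat \<Rightarrow> nat \<Rightarrow> (nat \<Rightarrow> nat \<Rightarrow> real) set" where
  "sign_seqs T d = PiE {..<T} (\<lambda>_. PiE {..<d} (\<lambda>_. {-1, 1}))"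

text \<open>The choice made at a step: the set A(t), the list of vectors w_k (functions on
  element indices, only their values on A(t) matter), and the vectors u_i (u i j is
  coordinate j of u_i in R^d).\<close>
type_synonym choice = "nat set \<times> (nat \<Rightarrow> real) list \<times> (nat \<Rightarrow> nat \<Rightarrow> real)"

text \<open>A strategy (player together with the algorithm's computation of the u_i) maps the
  step index t and the sign sequence to the choice at step t.\<close>
type_synonym strategy = "nat \<Rightarrow> (nat \<Rightarrow> nat \<Rightarrow> real) \<Rightarrow> choice"

definition ch_A :: "choice \<Rightarrow> nat set" where "ch_A c = fst c"
definition ch_W :: "choice \<Rightarrow> (nat \<Rightarrow> real) list" where "ch_W c = fst (snd c)"
definition ch_U :: "choice \<Rightarrow> nat \<Rightarrow> nat \<Rightarrow> real" where "ch_U c = snd (snd c)"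

fun frac :: "nat \<Rightarrow> real \<Rightarrow> strategy \<Rightarrow> (nat \<Rightarrow> nat \<Rightarrow> real) \<Rightarrow> nat \<Rightarrow> nat \<Rightarrow> real" where
  "frac d g S r 0 i = 0"
| "frac d g S r (Suc t) i =
     (if i \<in> ch_A (S t r)
      then frac d g S r t i + g * (\<Sum>j<d. r t j * ch_U (S t r) i j)
      else frac d g S r t i)"

text \<open>Alive elements (among 0..n-1) after t steps, i.e. at the beginning of step t+1.\<close>
definition alive :: "nat \<Rightarrow> nat \<Rightarrow> real \<Rightarrow> strategy \<Rightarrow> (nat \<Rightarrow> nat \<Rightarrow> real) \<Rightarrow> nat \<Rightarrow> nat set" where
  "alive n d g S r t = {i. i < n \<and> \<bar>frac d g S r t i\<bar> < 1 - 1 / real n}"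

definition sqnorm :: "nat \<Rightarrow> (nat \<Rightarrow> real) \<Rightarrow> real" where
  "sqnorm d v = (\<Sum>j<d. (v j)\<^sup>2)"

definition valid_choice :: "nat \<Rightarrow> real \<Rightarrow> nat set \<Rightarrow> choice \<Rightarrow> bool" where
  "valid_choice d \<delta> N c \<longleftrightarrow>
     (let A = ch_A c; W = ch_W c; U = ch_U c; \<beta> = (1 - \<delta>) / 2 in
       A \<subseteq> N \<and>
       (N \<noteq> {} \<longrightarrow>
          A \<noteq> {} \<and>
          real (length W) \<le> \<delta> * real (card A) \<and>
          (\<forall>w \<in> set W. \<forall>j<d. (\<Sum>i\<in>A. w i * U i j) = 0) \<and>
          (\<forall>b :: nat \<Rightarrow> real. sqnorm d (\<lambda>j. \<Sum>i\<in>A. b i * U i j)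
               \<le> (1 / \<beta>) * (\<Sum>i\<in>A. (b i)\<^sup>2 * sqnorm d (U i))) \<and>
          (\<forall>i\<in>A. sqnorm d (U i) \<le> 1) \<and>
          (\<Sum>i\<in>A. sqnorm d (U i)) \<ge> (1 - \<delta> - \<beta>) * real (card A)))"

definition nonanticipating :: "nat \<Rightarrow> nat \<Rightarrow> strategy \<Rightarrow> bool" where
  "nonanticipating T d S \<longleftrightarrow>
     (\<forall>t<T. \<forall>r \<in> sign_seqs T d. \<forall>r' \<in> sign_seqs T d.
        (\<forall>s<t. r s = r' s) \<longrightarrow> S t r = S t r')"

definition valid_strategy :: "nat \<Rightarrow> nat \<Rightarrow> nat \<Rightarrow> real \<Rightarrow> real \<Rightarrow> strategy \<Rightarrow> bool" where
  "valid_strategy n T d g \<delta> S \<longleftrightarrow>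
     nonanticipating T d S \<and>
     (\<forall>t<T. \<forall>r \<in> sign_seqs T d. valid_choice d \<delta> (alive n d g S r t) (S t r))"

end

theory Submission
  imports Defs
begin


definition signs :: "nat \<Rightarrow> (nat \<Rightarrow> real) set" where
  "signs d = PiE {..<d} (\<lambda>_. {-1, 1})"

lemma finite_signs: "finite (signs d)" unfolding signs_def by (intro finite_PiE) auto

lemma card_signs: "card (signs d) = 2 ^ d"
  proof -
  have "card {-1, 1::real} = 2" by simp
  then show ?thesis unfolding signs_def by (subst card_PiE) (auto simp: numeral_2_eq_2)
qed

lemma exp_sum_signs:
  fixes z :: "nat \<Rightarrow> 'a::{real_normed_field,banach}"
  shows "(\<Sum>v\<in>signs d. exp (\<Sum>j<d. of_real (v j) * z j)) = (\<Prod>j<d. exp (z j) + exp (- z j))"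
proof -
  have "(\<Prod>j<d. exp (z j) + exp (- z j)) = (\<Prod>j<d. \<Sum>y\<in>{-1,1::real}. exp (of_real y * z j))"
    by (intro prod.cong) (auto simp: add.commute)
  also have "\<dots> = (\<Sum>g\<in>signs d. \<Prod>j<d. exp (of_real (g j) * z j))"
    unfolding signs_def by (rule prod_sum_PiE) auto
  also have "\<dots> = (\<Sum>v\<in>signs d. exp (\<Sum>j<d. of_real (v j) * z j))"
    by (intro sum.cong refl) (simp add: exp_sum)
  finally show ?thesis ..
qed

lemma Re_mult_of_real_aux: "Re (u * complex_of_real r) = Re u * r" by simp

lemma cos_sum_signs:
  fixes w :: "nat \<Rightarrow> real"
  shows "(\<Sum>v\<in>signs d. cos (a * (x + (\<Sum>j<d. v j * w j))))
         = real (card (signs d)) * cos (a * x) * (\<Prod>j<d. cos (a * w j))"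
proof -
  define z where "z j = \<i> * complex_of_real (a * w j)" for j
  have e1: "exp (\<i> * complex_of_real (a * (x + (\<Sum>j<d. v j * w j))))
      = exp (\<i> * complex_of_real (a*x)) * exp (\<Sum>j<d. of_real (v j) * z j)" for v
  proof -
    have "\<i> * complex_of_real (a * (x + (\<Sum>j<d. v j * w j))) =
          \<i> * complex_of_real (a*x) + (\<Sum>j<d. of_real (v j) * z j)"
      by (simp add: z_def distrib_left sum_distrib_left algebra_simps)
    then show ?thesis by (simp add: exp_add)
  qed
  have e2: "exp (z j) + exp (- z j) = complex_of_real (2 * cos (a * w j))" for j
  proof -
    have "exp (z j) = cis (a * w j)" by (simp add: z_def cis_conv_exp)
    moreover have "exp (- z j) = cis (- (a * w j))" by (simp add: z_def cis_conv_exp)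
    ultimately show ?thesis by (simp add: complex_eq_iff cis.sel)
  qed
  have "(\<Sum>v\<in>signs d. cos (a * (x + (\<Sum>j<d. v j * w j))))
      = Re (\<Sum>v\<in>signs d. exp (\<i> * complex_of_real (a * (x + (\<Sum>j<d. v j * w j)))))"
    by (simp add: Re_sum Re_exp)
  also have "\<dots> = Re (exp (\<i> * complex_of_real (a*x)) * (\<Sum>v\<in>signs d. exp (\<Sum>j<d. of_real (v j) * z j)))"
    by (simp only: e1 sum_distrib_left)
  also have "\<dots> = Re (exp (\<i> * complex_of_real (a*x)) * complex_of_real (\<Prod>j<d. 2 * cos (a * w j)))"
    by (simp add: exp_sum_signs e2)
  also have "\<dots> = Re (exp (\<i> * complex_of_real (a*x))) * (\<Prod>j<d. 2 * cos (a * w j))"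
    by (rule Re_mult_of_real_aux)
  also have "\<dots> = cos (a*x) * (\<Prod>j<d. 2 * cos (a * w j))"
    by (simp add: Re_exp)
  also have "\<dots> = real (card (signs d)) * cos (a * x) * (\<Prod>j<d. cos (a * w j))"
    by (simp add: card_signs prod.distrib)
  finally show ?thesis .
qed

lemma exp_sum_signs_real:
  fixes w :: "nat \<Rightarrow> real"
  shows "(\<Sum>v\<in>signs d. exp (\<Sum>j<d. v j * w j)) = (\<Prod>j<d. exp (w j) + exp (- w j))"
  using exp_sum_signs[where z=w and d=d] by simp
lemma fact_double_ge: "2 ^ n * fact n \<le> (fact (2*n) :: real)"
proof (induction n)
  case 0 then show ?case by simp
next
  case (Suc n)
  have "2 * Suc n = Suc (Suc (2*n))" by simp
  then have "fact (2 * Suc n) = (real (2*n+2)) * (real (2*n+1)) * (fact (2*n) :: real)"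
    by (simp only: fact_Suc) (simp add: algebra_simps)
  also have "\<dots> \<ge> 2 * real (n+1) * (fact (2*n))"
    by (intro mult_right_mono) (auto simp: algebra_simps)
  finally have "fact (2 * Suc n) \<ge> 2 * real (n+1) * (fact (2*n) :: real)" .
  moreover have "2 * real (n+1) * (2 ^ n * fact n) \<le> 2 * real (n+1) * (fact (2*n) :: real)"
    using Suc by (intro mult_left_mono) auto
  moreover have "2 ^ Suc n * fact (Suc n) = 2 * real (n+1) * (2 ^ n * (fact n :: real))"
    by (simp add: algebra_simps)
  ultimately show ?case by linarith
qed

lemma cosh_le_exp_sq: "exp (y::real) + exp (-y) \<le> 2 * exp (y^2/2)"
proof -
  have c: "(\<lambda>n. if even n then y ^ n /\<^sub>R fact n else 0) sums cosh y" by (rule cosh_converges)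
  have c2: "(\<lambda>n. sum (\<lambda>n. if even n then y ^ n /\<^sub>R fact n else 0) {n*2..<n*2+2}) sums cosh y"
    by (rule sums_group[OF c]) simp
  have eq: "sum (\<lambda>n. if even n then y ^ n /\<^sub>R fact n else 0) {n*2..<n*2+2} = y^(2*n) / fact (2*n)" for n
  proof -
    have "{n*2..<n*2+2} = {n*2, n*2+1}" by auto
    then show ?thesis by (simp add: mult.commute[of n 2] divide_inverse)
  qed
  have c3: "(\<lambda>n. y^(2*n) / fact (2*n)) sums cosh y" using c2 unfolding eq .
  have e: "(\<lambda>n. (y^2/2) ^ n /\<^sub>R fact n) sums exp (y^2/2)" by (rule exp_converges)
  have e2: "(\<lambda>n. y^(2*n) / (2^n * fact n)) sums exp (y^2/2)"
  proof -
    have t: "(\<lambda>n. (y^2/2) ^ n /\<^sub>R fact n) = (\<lambda>n. y^(2*n) / (2^n * fact n))"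
      by (rule ext) (simp add: power_divide power_mult field_simps flip: power_mult)
    show ?thesis using e unfolding t .
  qed
  have le: "y^(2*n) / fact (2*n) \<le> y^(2*n) / (2^n * fact n)" for n
  proof -
    have "0 \<le> y^(2*n)" by (simp add: power_mult)
    moreover have "0 < 2^n * (fact n :: real)" by simp
    ultimately show ?thesis using fact_double_ge[of n] by (intro divide_left_mono) auto
  qed
  have "cosh y \<le> exp (y^2/2)" by (rule sums_le[OF le c3 e2])
  then show ?thesis by (simp add: cosh_def)
qed

lemma exp_neg_le: assumes "(y::real) > 0" shows "exp (-y) \<le> 4 / y^2"
proof -
  have "1 + y/2 \<le> exp (y/2)" by (rule exp_ge_add_one_self)
  hence "(y/2)^2 \<le> exp (y/2) ^ 2" using assms by (intro power_mono) linarith+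
  also have "exp (y/2) ^ 2 = exp y" by (simp add: exp_double[symmetric] power2_eq_square exp_add[symmetric])
  finally have "y^2/4 \<le> exp y" by (simp add: power_divide)
  then show ?thesis using assms by (simp add: exp_minus field_simps)
qed

lemma cos_le_exp: assumes "y^2 \<le> 12/25" shows "cos (y::real) \<le> exp (-(24/25) * y^2 / 2)"
proof -
  obtain t where "cos y = (\<Sum>m<4. cos_coeff m * y ^ m) + (cos(t + 1/2 * real 4 * pi) / fact 4) * y ^ 4"
    using Maclaurin_cos_expansion[of y 4] by blast
  moreover have "(\<Sum>m<4. cos_coeff m * y ^ m) = 1 - y^2/2"
  proof -
    have "{..<4::nat} = {0,1,2,3}" by auto
    then show ?thesis by (simp add: cos_coeff_def)
  qed
  moreover have "(cos(t + 1/2 * real 4 * pi) / fact 4) * y ^ 4 \<le> y^4/24"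
  proof -
    have "cos(t + 1/2 * real 4 * pi) * y^4 \<le> 1 * y^4"
      by (rule mult_right_mono) (simp_all add: zero_le_even_power)
    moreover have "(fact 4::real) = 24" by (simp add: numeral_eq_Suc)
    ultimately show ?thesis by simp
  qed
  ultimately have "cos y \<le> 1 - y^2/2 + y^4/24" by linarith
  also have "\<dots> \<le> 1 - (24/25) * y^2/2"
  proof -
    have "y^4 = y^2 * y^2" by (simp add: power2_eq_square power4_eq_xxxx)
    moreover have "y^2 * y^2 \<le> y^2 * (12/25)" using assms by (intro mult_left_mono) auto
    ultimately have "y^4 \<le> y^2 * (12/25)" by simp
    then show ?thesis by simp
  qed
  also have "\<dots> \<le> exp (-(24/25) * y^2 / 2)"
    using exp_ge_add_one_self[of "-(24/25) * y^2 / 2"] by simp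
  finally show ?thesis .
qed

lemma tail_count:
  fixes w :: "nat \<Rightarrow> real"
  assumes eta: "\<eta> > 0"
  shows "real (card {v\<in>signs d. \<eta> < (\<Sum>j<d. v j * w j)})
         \<le> real (card (signs d)) * (16 * (\<Sum>j<d. (w j)^2)^2 / \<eta>^4)"
proof (cases "(\<Sum>j<d. (w j)^2) = 0")
  case True
  then have "\<forall>j\<in>{..<d}. (w j)^2 = 0" by (subst sum_nonneg_eq_0_iff[symmetric]) auto
  then have E: "{v\<in>signs d. \<eta> < (\<Sum>j<d. v j * w j)} = {}" using eta by auto
  have "0 \<le> real (card (signs d)) * (16 * (\<Sum>j<d. (w j)^2)^2 / \<eta>^4)" using eta by simp
  then show ?thesis by (simp only: E card.empty of_nat_0)
next
  case False
  define s where "s = (\<Sum>j<d. (w j)^2)"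
  have s0: "s > 0" using False unfolding s_def by (metis sum_nonneg zero_le_power2 order_le_less)
  define \<theta> where "\<theta> = \<eta> / s"
  have th0: "\<theta> > 0" using s0 eta by (simp add: \<theta>_def)
  let ?E = "{v\<in>signs d. \<eta> < (\<Sum>j<d. v j * w j)}"
  have "real (card ?E) = (\<Sum>v\<in>?E. 1)" by simp
  also have "\<dots> \<le> (\<Sum>v\<in>?E. exp (\<theta> * (\<Sum>j<d. v j * w j) - \<theta> * \<eta>))"
  proof (intro sum_mono)
    fix v assume "v \<in> ?E"
    then have "0 \<le> \<theta> * (\<Sum>j<d. v j * w j) - \<theta> * \<eta>" using th0
      by (simp add: right_diff_distrib[symmetric])
    then show "1 \<le> exp (\<theta> * (\<Sum>j<d. v j * w j) - \<theta> * \<eta>)" by simp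
  qed
  also have "\<dots> \<le> (\<Sum>v\<in>signs d. exp (\<theta> * (\<Sum>j<d. v j * w j) - \<theta> * \<eta>))"
    by (intro sum_mono2 finite_signs) auto
  also have "\<dots> = exp (- \<theta> * \<eta>) * (\<Sum>v\<in>signs d. exp (\<Sum>j<d. v j * (\<theta> * w j)))"
  proof -
    have "exp (\<theta> * (\<Sum>j<d. v j * w j) - \<theta> * \<eta>) = exp (- \<theta> * \<eta>) * exp (\<Sum>j<d. v j * (\<theta> * w j))" for v
    proof -
      have "\<theta> * (\<Sum>j<d. v j * w j) - \<theta> * \<eta> = - \<theta> * \<eta> + (\<Sum>j<d. v j * (\<theta> * w j))"
        by (simp add: sum_distrib_left algebra_simps)
      then show ?thesis by (simp only: exp_add)
    qed
    then show ?thesis by (simp add: sum_distrib_left)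
  qed
  also have "\<dots> = exp (- \<theta> * \<eta>) * (\<Prod>j<d. exp (\<theta> * w j) + exp (- (\<theta> * w j)))"
    by (simp add: exp_sum_signs_real)
  also have "\<dots> \<le> exp (- \<theta> * \<eta>) * (\<Prod>j<d. 2 * exp ((\<theta> * w j)^2/2))"
    by (intro mult_left_mono prod_mono conjI cosh_le_exp_sq) (auto intro: add_nonneg_nonneg)
  also have "\<dots> = real (card (signs d)) * exp (- \<theta> * \<eta> + \<theta>^2 * s / 2)"
  proof -
    have "(\<Prod>j<d. 2 * exp ((\<theta> * w j)^2/2)) = 2^d * exp (\<theta>^2 * s / 2)"
      by (simp add: prod.distrib exp_sum[symmetric] s_def power_mult_distrib
        sum_distrib_left sum_divide_distrib)
    then show ?thesis by (simp only: card_signs exp_add) simp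
  qed
  also have "- \<theta> * \<eta> + \<theta>^2 * s / 2 = - (\<eta>^2 / (2 * s))"
    using s0 by (simp add: \<theta>_def field_simps power2_eq_square)
  also have "exp (- (\<eta>^2 / (2 * s))) \<le> 4 / (\<eta>^2 / (2 * s))^2"
    by (rule exp_neg_le) (use s0 eta in simp)
  also have "4 / (\<eta>^2 / (2 * s))^2 = 16 * s^2 / \<eta>^4"
    using s0 eta by (simp add: field_simps power2_eq_square power4_eq_xxxx)
  finally show ?thesis by (simp add: s_def mult_left_mono)
qed


definition aa :: real where "aa = 29/20"
definition ee :: real where "ee = 1/30"
definition cc :: real where "cc = cos (aa * (1 + ee))"
definition c0 :: real where "c0 = cos aa"
definition kk :: real where "kk = (24/25) * aa^2 / 2 - 1"
definition tau :: real where "tau = min (1/10) (c0 * kk * ee^4 / 256)"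

lemma aa_pos: "aa > 0" by (simp add: aa_def)
lemma ee_pos: "ee > 0" by (simp add: ee_def)
lemma aa_ee_val: "aa * (1 + ee) = 899/600" by (simp add: aa_def ee_def)
lemma aa_ee_lt: "aa * (1 + ee) < pi / 2"
  using pi_gt3 aa_ee_val by simp
lemma cc_pos: "cc > 0"
  unfolding cc_def using aa_ee_lt aa_ee_val pi_gt3
  by (intro cos_gt_zero_pi) auto
lemma cos_le_mono_aux: "0 \<le> x \<Longrightarrow> x \<le> y \<Longrightarrow> y \<le> pi \<Longrightarrow> cos y \<le> cos x"
  by (subst cos_mono_le_eq) auto
lemma c0_ge_cc: "c0 \<ge> cc"
  unfolding cc_def c0_def using aa_ee_val pi_gt3 aa_pos ee_pos
  by (intro cos_le_mono_aux) (auto simp: aa_def)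
lemma c0_pos: "c0 > 0" using c0_ge_cc cc_pos by linarith
lemma kk_pos: "kk > 0" by (simp add: kk_def aa_def power2_eq_square)
lemma kk_le1: "kk \<le> 1" by (simp add: kk_def aa_def power2_eq_square)
lemma tau_pos: "tau > 0" using c0_pos kk_pos ee_pos by (simp add: tau_def)

lemma cos_ge_cc: assumes "\<bar>y\<bar> \<le> 1 + ee" shows "cos (aa * y) \<ge> cc"
proof -
  have eq: "cos (aa * y) = cos (aa * \<bar>y\<bar>)" by (cases "y \<ge> 0") auto
  have "aa * \<bar>y\<bar> \<le> aa * (1 + ee)" using assms aa_pos by (intro mult_left_mono) auto
  then have "cos (aa * \<bar>y\<bar>) \<ge> cc" unfolding cc_def using aa_ee_val pi_gt3 aa_pos assms
    by (intro cos_le_mono_aux) auto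
  then show ?thesis using eq by simp
qed

lemma cos_ge_c0: assumes "\<bar>y\<bar> \<le> 1" shows "cos (aa * y) \<ge> c0"
proof -
  have eq: "cos (aa * y) = cos (aa * \<bar>y\<bar>)" by (cases "y \<ge> 0") auto
  have "aa * \<bar>y\<bar> \<le> aa" using assms aa_pos by (metis mult_left_mono mult.right_neutral less_imp_le)
  then have "cos (aa * \<bar>y\<bar>) \<ge> c0" unfolding c0_def using pi_gt3 aa_pos
    by (intro cos_le_mono_aux) (auto simp: aa_def)
  then show ?thesis using eq by simp
qed

lemma exp_neg_le_lin: assumes "0 \<le> (y::real)" "y \<le> 1" shows "exp (- y) \<le> 1 - y/2"
proof -
  have "1 + y \<le> exp y" by (rule exp_ge_add_one_self)
  then have "exp (-y) \<le> 1 / (1 + y)" using assms by (simp add: exp_minus field_simps)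
  also have "\<dots> \<le> 1 - y/2"
  proof -
    have "y * y \<le> y * 1" using assms by (intro mult_left_mono) auto
    then have "1 \<le> (1 - y/2) * (1 + y)" by (simp add: algebra_simps)
    then show ?thesis using assms by (simp add: divide_le_eq)
  qed
  finally show ?thesis .
qed

lemma prod_cos_le:
  fixes w :: "nat \<Rightarrow> real"
  assumes "(\<Sum>j<d. (w j)^2) \<le> tau"
  shows "(\<Prod>j<d. cos (aa * w j)) \<le> exp (- (24/25) * aa^2 * (\<Sum>j<d. (w j)^2) / 2)"
    and "0 \<le> (\<Prod>j<d. cos (aa * w j))"
proof -
  have wj: "(w j)^2 \<le> 1/10" if "j < d" for j
  proof -
    have "(w j)^2 \<le> (\<Sum>j<d. (w j)^2)"
      using that by (intro member_le_sum) auto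
    then show ?thesis using assms by (simp add: tau_def)
  qed
  have sq: "(aa * w j)^2 \<le> 12/25" if "j < d" for j
  proof -
    have "(aa * w j)^2 = (841/400) * (w j)^2" by (simp add: aa_def power_mult_distrib power2_eq_square)
    then show ?thesis using wj[OF that] by simp
  qed
  have nn: "0 \<le> cos (aa * w j)" if "j < d" for j
  proof -
    have "(aa * w j)^2 \<le> 1" using sq[OF that] by simp
    then have "\<bar>aa * w j\<bar> \<le> 1" by (simp add: abs_square_le_1)
    then show ?thesis using pi_gt3 by (intro cos_ge_zero) auto
  qed
  show "0 \<le> (\<Prod>j<d. cos (aa * w j))" using nn by (intro prod_nonneg) auto
  have le: "cos (aa * w j) \<le> exp (-(24/25) * (aa * w j)^2 / 2)" if "j < d" for j
    by (rule cos_le_exp[OF sq[OF that]])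
  have "(\<Prod>j<d. cos (aa * w j)) \<le> (\<Prod>j<d. exp (-(24/25) * (aa * w j)^2 / 2))"
    by (intro prod_mono) (use nn le in blast)
  also have "\<dots> = exp (- (24/25) * aa^2 * (\<Sum>j<d. (w j)^2) / 2)"
    by (simp add: exp_sum[symmetric] sum_distrib_left sum_divide_distrib power_mult_distrib mult.assoc)
  finally show "(\<Prod>j<d. cos (aa * w j)) \<le> exp (- (24/25) * aa^2 * (\<Sum>j<d. (w j)^2) / 2)" .
qed

lemma core:
  fixes w :: "nat \<Rightarrow> real"
  assumes x: "\<bar>x\<bar> < L" and L: "L \<le> 1" and s: "(\<Sum>j<d. (w j)^2) \<le> tau"
  shows "exp (\<Sum>j<d. (w j)^2) * (\<Sum>v\<in>signs d. (if \<bar>x + (\<Sum>j<d. v j * w j)\<bar> < L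
            then cos (aa * (x + (\<Sum>j<d. v j * w j))) else cc))
         \<le> real (card (signs d)) * cos (aa * x)"
proof -
  define s where "s = (\<Sum>j<d. (w j)^2)"
  define K where "K = real (card (signs d))"
  define Z where "Z v = (\<Sum>j<d. v j * w j)" for v :: "nat \<Rightarrow> real"
  define P where "P = (\<Prod>j<d. cos (aa * w j))"
  have s0: "0 \<le> s" unfolding s_def by (intro sum_nonneg) auto
  have stau: "s \<le> tau" using s by (simp add: s_def)
  have K0: "K > 0" unfolding K_def using finite_signs card_signs by simp
  have cx: "cos (aa * x) \<ge> c0" using x L by (intro cos_ge_c0) auto
  have pt: "(if \<bar>x + Z v\<bar> < L then cos (aa * (x + Z v)) else cc)
        \<le> cos (aa * (x + Z v)) + (if ee < \<bar>Z v\<bar> then 2 else 0)" for v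
  proof (cases "\<bar>x + Z v\<bar> < L")
    case False
    show ?thesis
    proof (cases "ee < \<bar>Z v\<bar>")
      case True
      have "cc \<le> 1" unfolding cc_def by simp
      moreover have "-1 \<le> cos (aa * (x + Z v))" by simp
      moreover have "(if \<bar>x + Z v\<bar> < L then cos (aa * (x + Z v)) else cc) = cc" using False by simp
      moreover have "(if ee < \<bar>Z v\<bar> then 2 else (0::real)) = 2" using True by simp
      ultimately show ?thesis by linarith
    next
      case F2: False
      have "\<bar>x + Z v\<bar> \<le> 1 + ee" using F2 x L by linarith
      then show ?thesis using False F2 cos_ge_cc by auto
    qed
  qed auto
  have sum1: "(\<Sum>v\<in>signs d. (if \<bar>x + Z v\<bar> < L then cos (aa * (x + Z v)) else cc))
      \<le> (\<Sum>v\<in>signs d. cos (aa * (x + Z v))) + 2 * real (card {v\<in>signs d. ee < \<bar>Z v\<bar>})"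
  proof -
    have "(\<Sum>v\<in>signs d. (if \<bar>x + Z v\<bar> < L then cos (aa * (x + Z v)) else cc))
        \<le> (\<Sum>v\<in>signs d. cos (aa * (x + Z v)) + (if ee < \<bar>Z v\<bar> then 2 else 0))"
      by (intro sum_mono pt)
    also have "\<dots> = (\<Sum>v\<in>signs d. cos (aa * (x + Z v))) + 2 * real (card {v\<in>signs d. ee < \<bar>Z v\<bar>})"
      by (simp add: sum.distrib sum.If_cases finite_signs Int_def conj_commute)
    finally show ?thesis .
  qed
  have cnt: "real (card {v\<in>signs d. ee < \<bar>Z v\<bar>}) \<le> 2 * (K * (16 * s^2 / ee^4))"
  proof -
    have "{v\<in>signs d. ee < \<bar>Z v\<bar>} \<subseteq> {v\<in>signs d. ee < (\<Sum>j<d. v j * w j)} \<union>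
            {v\<in>signs d. ee < (\<Sum>j<d. v j * (- w j))}"
      by (auto simp: Z_def sum_negf)
    then have "card {v\<in>signs d. ee < \<bar>Z v\<bar>} \<le> card ({v\<in>signs d. ee < (\<Sum>j<d. v j * w j)} \<union>
            {v\<in>signs d. ee < (\<Sum>j<d. v j * (- w j))})"
      by (intro card_mono) (auto intro: finite_subset[OF _ finite_signs])
    also have "\<dots> \<le> card {v\<in>signs d. ee < (\<Sum>j<d. v j * w j)} +
            card {v\<in>signs d. ee < (\<Sum>j<d. v j * (- w j))}" by (rule card_Un_le)
    finally have "real (card {v\<in>signs d. ee < \<bar>Z v\<bar>}) \<le> real (card {v\<in>signs d. ee < (\<Sum>j<d. v j * w j)}) +
            real (card {v\<in>signs d. ee < (\<Sum>j<d. v j * (- w j))})" by linarith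
    also have "\<dots> \<le> K * (16 * s^2 / ee^4) + K * (16 * s^2 / ee^4)"
    proof -
      have h1: "real (card {v\<in>signs d. ee < (\<Sum>j<d. v j * w j)}) \<le> K * (16 * s^2 / ee^4)"
        using tail_count[OF ee_pos, of d w] by (simp add: K_def s_def)
      have h2: "real (card {v\<in>signs d. ee < (\<Sum>j<d. v j * (- w j))}) \<le> K * (16 * s^2 / ee^4)"
        using tail_count[OF ee_pos, of d "\<lambda>j. - w j"] by (simp add: K_def s_def)
      show ?thesis using h1 h2 by linarith
    qed
    finally show ?thesis by simp
  qed
  have cs: "(\<Sum>v\<in>signs d. cos (aa * (x + Z v))) = K * cos (aa * x) * P"
    unfolding Z_def K_def P_def by (rule cos_sum_signs)
  have Pb: "P \<le> exp (- (24/25) * aa^2 * s / 2)" "0 \<le> P"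
    using prod_cos_le[OF s] by (simp_all add: P_def s_def)
  have es: "exp s \<le> 2" using exp_bound_half[of s] stau s0 by (simp add: tau_def)
  have ks: "kk * s \<le> 1"
  proof -
    have "kk \<le> 1" by (rule kk_le1)
    moreover have "s \<le> 1" using stau by (simp add: tau_def)
    ultimately show ?thesis using s0 kk_pos by (metis mult_le_one less_imp_le)
  qed
  have lhs: "exp s * (\<Sum>v\<in>signs d. (if \<bar>x + Z v\<bar> < L then cos (aa * (x + Z v)) else cc))
       \<le> exp s * (K * cos (aa * x) * P) + exp s * (4 * (K * (16 * s^2 / ee^4)))"
  proof -
    have "(\<Sum>v\<in>signs d. (if \<bar>x + Z v\<bar> < L then cos (aa * (x + Z v)) else cc))
        \<le> K * cos (aa * x) * P + 4 * (K * (16 * s^2 / ee^4))" using sum1 cnt cs by linarith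
    then have "exp s * (\<Sum>v\<in>signs d. (if \<bar>x + Z v\<bar> < L then cos (aa * (x + Z v)) else cc))
        \<le> exp s * (K * cos (aa * x) * P + 4 * (K * (16 * s^2 / ee^4)))" by (rule mult_left_mono) simp
    then show ?thesis by (simp only: distrib_left)
  qed
  have t1: "exp s * (K * cos (aa * x) * P) \<le> K * cos (aa * x) * exp (- (kk * s))"
  proof -
    have "exp s * P \<le> exp s * exp (- (24/25) * aa^2 * s / 2)" using Pb by simp
    also have "\<dots> = exp (- (kk * s))" by (simp add: exp_add[symmetric] kk_def field_simps)
    finally have "exp s * P \<le> exp (- (kk * s))" .
    then have "(K * cos (aa * x)) * (exp s * P) \<le> (K * cos (aa * x)) * exp (- (kk * s))"
      using K0 cx c0_pos by (intro mult_left_mono) auto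
    then show ?thesis by (simp add: ac_simps)
  qed
  have t2: "exp s * (4 * (K * (16 * s^2 / ee^4))) \<le> K * (128 * s^2 / ee^4)"
  proof -
    have "exp s * (4 * (K * (16 * s^2 / ee^4))) \<le> 2 * (4 * (K * (16 * s^2 / ee^4)))"
      using es K0 s0 ee_pos by (intro mult_right_mono) auto
    also have "2 * (4 * (K * (16 * s^2 / ee^4))) = K * (128 * s^2 / ee^4)" by (simp add: field_simps)
    finally show ?thesis .
  qed
  have t3: "128 * s^2 / ee^4 \<le> c0 * kk * s / 2"
  proof -
    have "s \<le> c0 * kk * ee^4 / 256" using stau by (simp add: tau_def)
    then have "s * s \<le> s * (c0 * kk * ee^4 / 256)" using s0 by (intro mult_left_mono)
    then show ?thesis using ee_pos by (simp add: field_simps power2_eq_square)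
  qed
  have t4: "cos (aa * x) * exp (- (kk * s)) + c0 * kk * s / 2 \<le> cos (aa * x)"
  proof -
    have "cos (aa * x) * exp (- (kk * s)) \<le> cos (aa * x) * (1 - kk * s / 2)"
      using exp_neg_le_lin[of "kk * s"] ks s0 kk_pos cx c0_pos by (intro mult_left_mono) auto
    moreover have "c0 * (kk * s) \<le> cos (aa * x) * (kk * s)"
      using cx s0 kk_pos by (intro mult_right_mono) auto
    ultimately show ?thesis by (simp add: algebra_simps)
  qed
  have "exp s * (\<Sum>v\<in>signs d. (if \<bar>x + Z v\<bar> < L then cos (aa * (x + Z v)) else cc))
      \<le> K * (cos (aa * x) * exp (- (kk * s)) + 128 * s^2 / ee^4)"
    using lhs t1 t2 by (simp add: distrib_left)
  also have "\<dots> \<le> K * cos (aa * x)"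
    using t3 t4 K0 by (intro mult_left_mono) auto
  finally have R: "exp s * (\<Sum>v\<in>signs d. (if \<bar>x + Z v\<bar> < L then cos (aa * (x + Z v)) else cc))
      \<le> K * cos (aa * x)" .
  show ?thesis using R unfolding Z_def K_def s_def .
qed


lemma sign_seqs_signs: "sign_seqs T d = PiE {..<T} (\<lambda>_. signs d)"
  unfolding sign_seqs_def signs_def ..

lemma finite_sign_seqs: "finite (sign_seqs T d)"
  unfolding sign_seqs_signs by (intro finite_PiE finite_signs) auto

lemma signs_ne: "signs d \<noteq> {}"
  unfolding signs_def by (simp add: PiE_eq_empty_iff)

lemma sign_seqs_ne: "sign_seqs T d \<noteq> {}"
  unfolding sign_seqs_signs using signs_ne by (simp add: PiE_eq_empty_iff)

lemma sign_seqs_upd: "r \<in> sign_seqs T d \<Longrightarrow> t < T \<Longrightarrow> v \<in> signs d \<Longrightarrow> r(t := v) \<in> sign_seqs T d"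
  unfolding sign_seqs_signs by (auto simp: PiE_def extensional_def)

lemma sign_seqs_app: "r \<in> sign_seqs T d \<Longrightarrow> t < T \<Longrightarrow> r t \<in> signs d"
  unfolding sign_seqs_signs by auto

lemma nonant_eq:
  assumes "nonanticipating T d S" "t < T" "r \<in> sign_seqs T d" "r' \<in> sign_seqs T d" "\<forall>s<t. r s = r' s"
  shows "S t r = S t r'"
  using assms unfolding nonanticipating_def by blast

lemma frac_agree:
  assumes na: "nonanticipating T d S" and r: "r \<in> sign_seqs T d" and r': "r' \<in> sign_seqs T d"
  shows "t \<le> T \<Longrightarrow> (\<forall>s<t. r s = r' s) \<Longrightarrow> frac d g S r t i = frac d g S r' t i"
proof (induction t arbitrary: i)
  case 0 then show ?case by simp
next
  case (Suc t)
  have S: "S t r = S t r'" using nonant_eq[OF na _ r r'] Suc.prems by auto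
  have "r t = r' t" using Suc.prems by auto
  moreover have "frac d g S r t j = frac d g S r' t j" for j using Suc by auto
  ultimately show ?case using S by simp
qed

definition Vs :: "nat \<Rightarrow> real \<Rightarrow> strategy \<Rightarrow> (nat \<Rightarrow> nat \<Rightarrow> real) \<Rightarrow> nat \<Rightarrow> nat \<Rightarrow> real" where
  "Vs d g S r t i = (\<Sum>s<t. if i \<in> ch_A (S s r) then g^2 * sqnorm d (ch_U (S s r) i) else 0)"

lemma Vs_agree:
  assumes na: "nonanticipating T d S" and r: "r \<in> sign_seqs T d" and r': "r' \<in> sign_seqs T d"
    and "t \<le> T" "\<forall>s<t. r s = r' s"
  shows "Vs d g S r t i = Vs d g S r' t i"
  unfolding Vs_def
proof (intro sum.cong refl)
  fix s assume "s \<in> {..<t}"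
  then have "S s r = S s r'" using nonant_eq[OF na _ r r'] assms by auto
  then show "(if i \<in> ch_A (S s r) then g^2 * sqnorm d (ch_U (S s r) i) else 0) =
        (if i \<in> ch_A (S s r') then g^2 * sqnorm d (ch_U (S s r') i) else 0)" by simp
qed

lemma Vs_Suc: "Vs d g S r (Suc t) i = Vs d g S r t i +
   (if i \<in> ch_A (S t r) then g^2 * sqnorm d (ch_U (S t r) i) else 0)"
  unfolding Vs_def by simp

lemma Vs_nonneg: "0 \<le> Vs d g S r t i"
  unfolding Vs_def sqnorm_def by (intro sum_nonneg) (auto intro!: mult_nonneg_nonneg sum_nonneg)

definition Q :: "nat \<Rightarrow> nat \<Rightarrow> real \<Rightarrow> strategy \<Rightarrow> (nat \<Rightarrow> nat \<Rightarrow> real) \<Rightarrow> nat \<Rightarrow> nat \<Rightarrow> real" where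
  "Q n d g S r t i = exp (Vs d g S r t i) *
     (if i \<in> alive n d g S r t then cos (aa * frac d g S r t i) else cc)"

lemma Q_lower: assumes "n \<ge> 1" shows "exp (Vs d g S r t i) * cc \<le> Q n d g S r t i"
proof (cases "i \<in> alive n d g S r t")
  case True
  then have "\<bar>frac d g S r t i\<bar> < 1 - 1 / real n" unfolding alive_def by simp
  moreover have "0 \<le> 1 / real n" by simp
  ultimately have "\<bar>frac d g S r t i\<bar> \<le> 1" by linarith
  then have "cos (aa * frac d g S r t i) \<ge> cc" using cos_ge_c0 c0_ge_cc by fastforce
  then show ?thesis using True unfolding Q_def by (intro mult_left_mono) auto
qed (simp add: Q_def)

lemma step_pointwise:
  assumes vs: "valid_strategy n T d g \<delta> S" and t: "t < T" and r: "r \<in> sign_seqs T d"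
    and n: "n \<ge> 2" and g: "g^2 \<le> tau"
  shows "(\<Sum>v\<in>signs d. Q n d g S (r(t := v)) (Suc t) i) \<le> real (card (signs d)) * Q n d g S r t i"
proof -
  have na: "nonanticipating T d S" using vs unfolding valid_strategy_def by blast
  have vc: "valid_choice d \<delta> (alive n d g S r t) (S t r)" using vs t r unfolding valid_strategy_def by blast
  define A where "A = ch_A (S t r)"
  define U where "U = ch_U (S t r)"
  define x where "x = frac d g S r t i"
  define V where "V = Vs d g S r t i"
  have AN: "A \<subseteq> alive n d g S r t" using vc unfolding valid_choice_def A_def Let_def by blast
  have eqs: "frac d g S (r(t := v)) (Suc t) i = (if i \<in> A then x + g * (\<Sum>j<d. v j * U i j) else x)"
     "Vs d g S (r(t := v)) (Suc t) i = V + (if i \<in> A then g^2 * sqnorm d (U i) else 0)"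
     "alive n d g S (r(t := v)) (Suc t) = {i. i < n \<and> \<bar>frac d g S (r(t := v)) (Suc t) i\<bar> < 1 - 1 / real n}"
    if v: "v \<in> signs d" for v
  proof -
    have r': "r(t := v) \<in> sign_seqs T d" using sign_seqs_upd[OF r t v] .
    have agr: "\<forall>s<t. r s = (r(t := v)) s" by auto
    have S: "S t (r(t := v)) = S t r" by (rule nonant_eq[OF na t r' r]) simp
    have fr: "frac d g S (r(t := v)) t j = frac d g S r t j" for j
      by (rule frac_agree[OF na r' r]) (use agr t in auto)
    have V: "Vs d g S (r(t := v)) t i = V"
      unfolding V_def by (rule Vs_agree[OF na r' r]) (use agr t in auto)
    have rt: "(r(t := v)) t = v" by simp
    show "frac d g S (r(t := v)) (Suc t) i = (if i \<in> A then x + g * (\<Sum>j<d. v j * U i j) else x)"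
      by (simp only: frac.simps S fr rt) (simp add: A_def U_def x_def)
    show "Vs d g S (r(t := v)) (Suc t) i = V + (if i \<in> A then g^2 * sqnorm d (U i) else 0)"
      by (simp only: Vs_Suc S V) (simp add: A_def U_def)
    show "alive n d g S (r(t := v)) (Suc t) = {i. i < n \<and> \<bar>frac d g S (r(t := v)) (Suc t) i\<bar> < 1 - 1 / real n}"
      unfolding alive_def ..
  qed
  show ?thesis
  proof (cases "i \<in> A")
    case False
    have "Q n d g S (r(t := v)) (Suc t) i = Q n d g S r t i" if v: "v \<in> signs d" for v
    proof -
      have "i \<in> alive n d g S (r(t := v)) (Suc t) \<longleftrightarrow> i \<in> alive n d g S r t"
        using eqs[OF v] False by (simp add: alive_def x_def)
      then show ?thesis using eqs[OF v] False by (simp add: Q_def x_def V_def)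
    qed
    then show ?thesis by simp
  next
    case True
    have ialive: "i \<in> alive n d g S r t" using True AN by blast
    then have "alive n d g S r t \<noteq> {}" by blast
    then have sq1: "sqnorm d (U i) \<le> 1" using vc True unfolding valid_choice_def A_def U_def Let_def by blast
    have xi: "\<bar>x\<bar> < 1 - 1 / real n" "i < n" using ialive by (auto simp: alive_def x_def)
    define w where "w j = g * U i j" for j
    have sw: "(\<Sum>j<d. (w j)^2) = g^2 * sqnorm d (U i)"
      by (simp add: w_def sqnorm_def power_mult_distrib sum_distrib_left)
    have swt: "(\<Sum>j<d. (w j)^2) \<le> tau"
    proof -
      have "g^2 * sqnorm d (U i) \<le> g^2 * 1" using sq1 by (intro mult_left_mono) auto
      then show ?thesis using sw g by simp
    qed
    have L1: "1 - 1 / real n \<le> 1" using n by simp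
    have Qv: "Q n d g S (r(t := v)) (Suc t) i = exp V * (exp (\<Sum>j<d. (w j)^2) *
        (if \<bar>x + (\<Sum>j<d. v j * w j)\<bar> < 1 - 1 / real n
            then cos (aa * (x + (\<Sum>j<d. v j * w j))) else cc))" if v: "v \<in> signs d" for v
    proof -
      have gs: "g * (\<Sum>j<d. v j * U i j) = (\<Sum>j<d. v j * w j)"
        by (simp add: w_def sum_distrib_left algebra_simps)
      show ?thesis using eqs[OF v] True xi(2) sw gs
        by (simp add: Q_def alive_def exp_add)
    qed
    have "(\<Sum>v\<in>signs d. Q n d g S (r(t := v)) (Suc t) i) =
       exp V * (exp (\<Sum>j<d. (w j)^2) * (\<Sum>v\<in>signs d. (if \<bar>x + (\<Sum>j<d. v j * w j)\<bar> < 1 - 1 / real n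
            then cos (aa * (x + (\<Sum>j<d. v j * w j))) else cc)))"
      using Qv by (simp add: sum_distrib_left)
    also have "\<dots> \<le> exp V * (real (card (signs d)) * cos (aa * x))"
      using core[OF xi(1) L1 swt] by (intro mult_left_mono) auto
    also have "\<dots> = real (card (signs d)) * Q n d g S r t i"
      using ialive by (simp add: Q_def x_def V_def)
    finally show ?thesis .
  qed
qed

lemma sum_slot:
  assumes t: "t < T"
  shows "(\<Sum>r\<in>sign_seqs T d. \<Sum>v\<in>signs d. F (r(t := v))) =
         real (card (signs d)) * (\<Sum>r\<in>sign_seqs T d. (F r :: real))"
proof -
  let ?O = "sign_seqs T d" and ?V = "signs d"
  define h where "h p = ((fst p)(t := snd p), fst p t)" for p :: "(nat \<Rightarrow> nat \<Rightarrow> real) \<times> (nat \<Rightarrow> real)"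
  define h' where "h' p = ((fst p)(t := snd p), fst p t)" for p :: "(nat \<Rightarrow> nat \<Rightarrow> real) \<times> (nat \<Rightarrow> real)"
  have bij: "bij_betw h (?O \<times> ?V) (?O \<times> ?V)"
  proof (rule bij_betw_byWitness[where f' = h'])
    show "\<forall>a\<in>?O \<times> ?V. h' (h a) = a" by (auto simp: h_def h'_def)
    show "\<forall>a'\<in>?O \<times> ?V. h (h' a') = a'" by (auto simp: h_def h'_def)
    show "h ` (?O \<times> ?V) \<subseteq> ?O \<times> ?V" using t by (auto simp: h_def intro: sign_seqs_upd sign_seqs_app)
    show "h' ` (?O \<times> ?V) \<subseteq> ?O \<times> ?V" using t by (auto simp: h'_def intro: sign_seqs_upd sign_seqs_app)
  qed
  have "(\<Sum>r\<in>?O. \<Sum>v\<in>?V. F (r(t := v))) = (\<Sum>p\<in>?O \<times> ?V. F (fst (h p)))"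
    by (simp add: sum.cartesian_product h_def split_def)
  also have "\<dots> = (\<Sum>q\<in>?O \<times> ?V. F (fst q))"
    using sum.reindex_bij_betw[OF bij, of "\<lambda>q. F (fst q)"] by simp
  also have "\<dots> = (\<Sum>r\<in>?O. \<Sum>v\<in>?V. F r)"
    by (simp only: sum.cartesian_product split_def)
  also have "\<dots> = real (card ?V) * (\<Sum>r\<in>?O. F r)"
    by (simp add: sum_distrib_left mult.commute)
  finally show ?thesis .
qed

lemma step_sum:
  assumes vs: "valid_strategy n T d g \<delta> S" and t: "t < T"
    and n: "n \<ge> 2" and g: "g^2 \<le> tau"
  shows "(\<Sum>r\<in>sign_seqs T d. Q n d g S r (Suc t) i) \<le> (\<Sum>r\<in>sign_seqs T d. Q n d g S r t i)"
proof -
  have K: "real (card (signs d)) > 0" using finite_signs signs_ne by (simp add: card_gt_0_iff)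
  have "real (card (signs d)) * (\<Sum>r\<in>sign_seqs T d. Q n d g S r (Suc t) i)
      = (\<Sum>r\<in>sign_seqs T d. \<Sum>v\<in>signs d. Q n d g S (r(t := v)) (Suc t) i)"
    by (rule sum_slot[OF t, symmetric])
  also have "\<dots> \<le> (\<Sum>r\<in>sign_seqs T d. real (card (signs d)) * Q n d g S r t i)"
    by (intro sum_mono step_pointwise[OF vs t _ n g])
  also have "\<dots> = real (card (signs d)) * (\<Sum>r\<in>sign_seqs T d. Q n d g S r t i)"
    by (simp add: sum_distrib_left)
  finally show ?thesis using K by simp
qed

lemma sum_Q_T:
  assumes vs: "valid_strategy n T d g \<delta> S" and n: "n \<ge> 2" and g: "g^2 \<le> tau"
  shows "t \<le> T \<Longrightarrow> (\<Sum>r\<in>sign_seqs T d. Q n d g S r t i) \<le> real (card (sign_seqs T d))"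
proof (induction t)
  case 0
  have "Q n d g S r 0 i \<le> 1" for r
    by (simp add: Q_def Vs_def cc_def)
  then have "(\<Sum>r\<in>sign_seqs T d. Q n d g S r 0 i) \<le> (\<Sum>r\<in>sign_seqs T d. 1)"
    by (intro sum_mono) auto
  then show ?case by simp
next
  case (Suc t)
  then show ?case using step_sum[OF vs _ n g, of t i] by simp
qed

lemma alive_mono_step:
  assumes vs: "valid_strategy n T d g \<delta> S" and t: "t < T" and r: "r \<in> sign_seqs T d"
  shows "alive n d g S r (Suc t) \<subseteq> alive n d g S r t"
proof
  fix i assume i: "i \<in> alive n d g S r (Suc t)"
  have vc: "valid_choice d \<delta> (alive n d g S r t) (S t r)" using vs t r unfolding valid_strategy_def by blast
  have AN: "ch_A (S t r) \<subseteq> alive n d g S r t" using vc unfolding valid_choice_def Let_def by blast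
  show "i \<in> alive n d g S r t"
  proof (cases "i \<in> ch_A (S t r)")
    case True then show ?thesis using AN by blast
  next
    case False then show ?thesis using i by (simp add: alive_def)
  qed
qed

lemma alive_mono:
  assumes vs: "valid_strategy n T d g \<delta> S" and r: "r \<in> sign_seqs T d"
  shows "s \<le> t \<Longrightarrow> t \<le> T \<Longrightarrow> alive n d g S r t \<subseteq> alive n d g S r s"
proof (induction t)
  case 0 then show ?case by simp
next
  case (Suc t)
  show ?case
  proof (cases "s = Suc t")
    case False
    then have "s \<le> t" using Suc by simp
    then show ?thesis using Suc alive_mono_step[OF vs _ r, of t] by auto
  qed simp
qed

lemma count_bound:
  assumes vs: "valid_strategy n T d g \<delta> S" and n: "n \<ge> 2" and g: "g^2 \<le> tau" and i: "i < n"
  shows "real (card {r\<in>sign_seqs T d. 3 * ln (real n) \<le> Vs d g S r T i}) * (real n ^ 3 * cc)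
         \<le> real (card (sign_seqs T d))"
proof -
  let ?O = "sign_seqs T d"
  let ?E = "{r\<in>?O. 3 * ln (real n) \<le> Vs d g S r T i}"
  have en: "exp (3 * ln (real n)) = real n ^ 3"
  proof -
    have "3 * ln (real n) = ln (real n ^ 3)" using n by (simp add: ln_realpow)
    then show ?thesis using n by simp
  qed
  have "real (card ?E) * (real n ^ 3 * cc) = (\<Sum>r\<in>?E. exp (3 * ln (real n)) * cc)"
    using en by simp
  also have "\<dots> \<le> (\<Sum>r\<in>?E. Q n d g S r T i)"
  proof (intro sum_mono)
    fix r assume "r \<in> ?E"
    then have "exp (3 * ln (real n)) \<le> exp (Vs d g S r T i)" by simp
    then have "exp (3 * ln (real n)) * cc \<le> exp (Vs d g S r T i) * cc"
      using cc_pos by (intro mult_right_mono) auto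
    also have "\<dots> \<le> Q n d g S r T i" by (rule Q_lower) (use n in simp)
    finally show "exp (3 * ln (real n)) * cc \<le> Q n d g S r T i" .
  qed
  also have "\<dots> \<le> (\<Sum>r\<in>?O. Q n d g S r T i)"
  proof (intro sum_mono2 finite_sign_seqs)
    fix r
    have "0 \<le> exp (Vs d g S r T i) * cc" using cc_pos by simp
    also have "\<dots> \<le> Q n d g S r T i" by (rule Q_lower) (use n in simp)
    finally show "0 \<le> Q n d g S r T i" .
  qed auto
  also have "\<dots> \<le> real (card ?O)" by (rule sum_Q_T[OF vs n g]) simp
  finally show ?thesis .
qed

lemma bad_implies:
  assumes vs: "valid_strategy n T d g \<delta> S" and r: "r \<in> sign_seqs T d"
    and al: "alive n d g S r T \<noteq> {}" and n: "n \<ge> 2" and gp: "g > 0"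
    and eps: "\<epsilon> > 0" and dl: "0 \<le> \<delta>" "\<delta> \<le> 1 - \<epsilon>"
    and T: "real T \<ge> 6 / (\<epsilon> * g^2) * real n * ln (real n)"
  shows "\<exists>i<n. 3 * ln (real n) \<le> Vs d g S r T i"
proof (rule ccontr)
  assume "\<not> ?thesis"
  then have lt: "\<And>i. i < n \<Longrightarrow> Vs d g S r T i < 3 * ln (real n)" by force
  have step: "g^2 * (\<epsilon> / 2) \<le> (\<Sum>i<n. if i \<in> ch_A (S s r) then g^2 * sqnorm d (ch_U (S s r) i) else 0)"
    if s: "s < T" for s
  proof -
    have "alive n d g S r T \<subseteq> alive n d g S r s" using alive_mono[OF vs r] s by simp
    then have ne: "alive n d g S r s \<noteq> {}" using al by blast
    have vc: "valid_choice d \<delta> (alive n d g S r s) (S s r)" using vs s r unfolding valid_strategy_def by blast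
    define A where "A = ch_A (S s r)"
    have AN: "A \<subseteq> alive n d g S r s" and Ane: "A \<noteq> {}"
      and sq: "(\<Sum>i\<in>A. sqnorm d (ch_U (S s r) i)) \<ge> (1 - \<delta> - (1 - \<delta>) / 2) * real (card A)"
      using vc ne unfolding valid_choice_def A_def Let_def by blast+
    have An: "A \<subseteq> {..<n}" using AN by (auto simp: alive_def)
    then have fA: "finite A" by (rule finite_subset) auto
    then have cA: "real (card A) \<ge> 1" using Ane by (simp add: card_gt_0_iff Suc_le_eq)
    have "\<epsilon> / 2 \<le> (1 - \<delta> - (1 - \<delta>) / 2) * 1" using dl by (simp add: field_simps)
    also have "\<dots> \<le> (1 - \<delta> - (1 - \<delta>) / 2) * real (card A)"
      using cA dl eps by (intro mult_left_mono) auto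
    also have "\<dots> \<le> (\<Sum>i\<in>A. sqnorm d (ch_U (S s r) i))" using sq .
    finally have "g^2 * (\<epsilon> / 2) \<le> g^2 * (\<Sum>i\<in>A. sqnorm d (ch_U (S s r) i))"
      by (intro mult_left_mono) auto
    also have "\<dots> = (\<Sum>i<n. if i \<in> A then g^2 * sqnorm d (ch_U (S s r) i) else 0)"
    proof -
      have "(\<Sum>i<n. if i \<in> A then g^2 * sqnorm d (ch_U (S s r) i) else 0)
          = (\<Sum>i\<in>{..<n} \<inter> A. g^2 * sqnorm d (ch_U (S s r) i))"
        by (simp add: sum.If_cases Int_def)
      also have "{..<n} \<inter> A = A" using An by blast
      finally show ?thesis by (simp add: sum_distrib_left)
    qed
    finally show ?thesis by (simp add: A_def)
  qed
  have "real T * (g^2 * (\<epsilon> / 2)) \<le> (\<Sum>s<T. \<Sum>i<n. if i \<in> ch_A (S s r) then g^2 * sqnorm d (ch_U (S s r) i) else 0)"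
    using sum_mono[of "{..<T}" "\<lambda>_. g^2 * (\<epsilon> / 2)", OF step] by simp
  also have "\<dots> = (\<Sum>i<n. Vs d g S r T i)"
    unfolding Vs_def by (rule sum.swap)
  also have "\<dots> < (\<Sum>i<n. 3 * ln (real n))"
  proof (rule sum_strict_mono)
    have "0 \<in> {..<n}" using n by simp
    then show "{..<n} \<noteq> {}" by blast
  qed (auto intro: lt)
  also have "\<dots> = real n * (3 * ln (real n))" by simp
  finally have A: "real T * (g^2 * (\<epsilon> / 2)) < real n * (3 * ln (real n))" .
  have "6 / (\<epsilon> * g^2) * real n * ln (real n) * (g^2 * (\<epsilon> / 2)) = real n * (3 * ln (real n))"
    using gp eps by (simp add: field_simps)
  moreover have "6 / (\<epsilon> * g^2) * real n * ln (real n) * (g^2 * (\<epsilon> / 2)) \<le> real T * (g^2 * (\<epsilon> / 2))"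
    using T gp eps by (intro mult_right_mono) auto
  ultimately show False using A by linarith
qed

lemma prob_bound:
  assumes vs: "valid_strategy n T d g \<delta> S" and n: "n \<ge> 2" and gp: "g > 0" and g: "g^2 \<le> tau"
    and eps: "\<epsilon> > 0" and dl: "0 \<le> \<delta>" "\<delta> \<le> 1 - \<epsilon>"
    and T: "real T \<ge> 6 / (\<epsilon> * g^2) * real n * ln (real n)"
  shows "measure_pmf.prob (pmf_of_set (sign_seqs T d)) {r. alive n d g S r T \<noteq> {}}
         \<le> (1 / cc) / (real n)^2"
proof -
  let ?O = "sign_seqs T d"
  let ?E = "\<lambda>i::nat. {r\<in>?O. 3 * ln (real n) \<le> Vs d g S r T i}"
  have Opos: "real (card ?O) > 0" using finite_sign_seqs sign_seqs_ne by (simp add: card_gt_0_iff)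
  have sub: "?O \<inter> {r. alive n d g S r T \<noteq> {}} \<subseteq> (\<Union>i<n. ?E i)"
  proof
    fix r assume r: "r \<in> ?O \<inter> {r. alive n d g S r T \<noteq> {}}"
    then have rO: "r \<in> ?O" and ne: "alive n d g S r T \<noteq> {}" by auto
    obtain i where "i < n" "3 * ln (real n) \<le> Vs d g S r T i"
      using bad_implies[OF vs rO ne n gp eps dl T] by blast
    then show "r \<in> (\<Union>i<n. ?E i)" using rO by blast
  qed
  have "card (?O \<inter> {r. alive n d g S r T \<noteq> {}}) \<le> card (\<Union>i<n. ?E i)"
    by (intro card_mono sub) (auto intro: finite_subset[OF _ finite_sign_seqs])
  also have "\<dots> \<le> (\<Sum>i<n. card (?E i))" by (rule card_UN_le) simp
  finally have "real (card (?O \<inter> {r. alive n d g S r T \<noteq> {}})) \<le> real (\<Sum>i<n. card (?E i))"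
    by (simp only: of_nat_le_iff)
  also have "real (\<Sum>i<n. card (?E i)) = (\<Sum>i<n. real (card (?E i)))" by (rule of_nat_sum)
  finally have c1: "real (card (?O \<inter> {r. alive n d g S r T \<noteq> {}})) \<le> (\<Sum>i<n. real (card (?E i)))" .
  have n3: "real n ^ 3 * cc > 0" using n cc_pos by simp
  have ci: "real (card (?E i)) \<le> real (card ?O) / (real n ^ 3 * cc)" if "i < n" for i
    by (subst pos_le_divide_eq[OF n3]) (rule count_bound[OF vs n g that])
  have "(\<Sum>i<n. real (card (?E i))) \<le> (\<Sum>i<n. real (card ?O) / (real n ^ 3 * cc))"
    by (intro sum_mono ci) auto
  also have "\<dots> = real (card ?O) * ((1 / cc) / (real n)^2)"
    using n cc_pos by (simp add: field_simps power2_eq_square power3_eq_cube)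
  finally have c2: "real (card (?O \<inter> {r. alive n d g S r T \<noteq> {}})) \<le> real (card ?O) * ((1 / cc) / (real n)^2)"
    using c1 by linarith
  have "measure_pmf.prob (pmf_of_set ?O) {r. alive n d g S r T \<noteq> {}}
      = real (card (?O \<inter> {r. alive n d g S r T \<noteq> {}})) / real (card ?O)"
    by (rule measure_pmf_of_set[OF sign_seqs_ne finite_sign_seqs])
  also have "\<dots> \<le> (1 / cc) / (real n)^2" using c2 Opos by (simp add: divide_le_eq mult.commute)
  finally show ?thesis .
qed

lemma step_size_pos: assumes "n \<ge> 2" "m \<ge> 1" shows "step_size n m > 0"
proof -
  have mn: "1 * 2 \<le> real m * real n" using assms by (intro mult_mono) auto
  then have "ln (real m * real n) > 0" by simp
  then show ?thesis unfolding step_size_def using assms by simp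
qed

lemma step_size_le: assumes "n \<ge> 2" "m \<ge> 1" shows "step_size n m \<le> 1 / (real n * ln 2)"
proof -
  have l2: "ln 2 > (0::real)" by simp
  have mn: "1 * 2 \<le> real m * real n" using assms by (intro mult_mono) auto
  have "ln 2 \<le> ln (real m * real n)" using mn by (subst ln_le_cancel_iff) auto
  moreover have "real n \<le> real n ^ 10" using assms by (intro self_le_power) auto
  moreover have "1 \<le> real m ^ 4" using assms by simp
  ultimately have "real n * 1 \<le> real n ^ 10 * real m ^ 4"
    by (intro mult_mono) auto
  then have "real n * ln 2 \<le> real n ^ 10 * real m ^ 4 * ln (real m * real n)"
    using l2 \<open>ln 2 \<le> ln (real m * real n)\<close> by (intro mult_mono) auto
  moreover have "0 < real n * ln 2" using l2 assms by simp
  ultimately show ?thesis unfolding step_size_def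
    by (intro divide_left_mono) auto
qed

theorem lemma18:
  fixes \<epsilon> :: real
  assumes "\<epsilon> > 0"
  shows "\<exists>C. \<forall>(n::nat) (m::nat) (d::nat) (\<delta>::real) (S::strategy).
           n \<ge> 2 \<longrightarrow> m \<ge> 1 \<longrightarrow> 0 \<le> \<delta> \<longrightarrow> \<delta> \<le> 1 - \<epsilon> \<longrightarrow>
           valid_strategy n (num_steps \<epsilon> n m) d (step_size n m) \<delta> S \<longrightarrow>
           measure_pmf.prob (pmf_of_set (sign_seqs (num_steps \<epsilon> n m) d))
             {r. alive n d (step_size n m) S r (num_steps \<epsilon> n m) \<noteq> {}}
           \<le> C / (real n)\<^sup>2"
proof -
  define N0 :: nat where "N0 = nat \<lceil>1 / (tau * (ln 2)^2)\<rceil> + 2"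
  have l2: "ln 2 > (0::real)" by simp
  show ?thesis
  proof (intro exI[of _ "max (1/cc) (real N0 ^ 2)"] allI impI)
    fix n m d :: nat and \<delta> :: real and S :: strategy
    assume n: "n \<ge> 2" and m: "m \<ge> 1" and d0: "0 \<le> \<delta>" and d1: "\<delta> \<le> 1 - \<epsilon>"
      and vs: "valid_strategy n (num_steps \<epsilon> n m) d (step_size n m) \<delta> S"
    let ?P = "measure_pmf.prob (pmf_of_set (sign_seqs (num_steps \<epsilon> n m) d))
             {r. alive n d (step_size n m) S r (num_steps \<epsilon> n m) \<noteq> {}}"
    have npos: "(real n)^2 > 0" using n by simp
    show "?P \<le> max (1/cc) (real N0 ^ 2) / (real n)^2"
    proof (cases "n < N0")
      case True
      have "?P \<le> 1" by (rule measure_pmf.prob_le_1)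
      also have "1 \<le> real N0 ^ 2 / (real n)^2"
        using True npos n by (simp add: field_simps power_strict_mono less_imp_le)
      also have "\<dots> \<le> max (1/cc) (real N0 ^ 2) / (real n)^2"
        using npos by (intro divide_right_mono) auto
      finally show ?thesis .
    next
      case False
      define g where "g = step_size n m"
      have gp: "g > 0" using step_size_pos[OF n m] by (simp add: g_def)
      have gle: "g \<le> 1 / (real n * ln 2)" using step_size_le[OF n m] by (simp add: g_def)
      have nN: "real n \<ge> 1 / (tau * (ln 2)^2)"
      proof -
        have "1 / (tau * (ln 2)^2) \<le> real (nat \<lceil>1 / (tau * (ln 2)^2)\<rceil>)" by (rule real_nat_ceiling_ge)
        also have "\<dots> \<le> real N0" by (simp add: N0_def)
        also have "\<dots> \<le> real n" using False by simp
        finally show ?thesis .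
      qed
      have g2: "g^2 \<le> tau"
      proof -
        have "g^2 \<le> (1 / (real n * ln 2))^2" using gp gle by (intro power_mono) auto
        also have "\<dots> = 1 / (real n * (real n * (ln 2)^2))" by (simp add: power2_eq_square)
        also have "\<dots> \<le> 1 / (real n * (ln 2)^2)"
          using n l2 by (intro divide_left_mono mult_mono) auto
        also have "\<dots> \<le> tau"
        proof -
          have "1 \<le> tau * (ln 2)^2 * real n"
            using nN tau_pos l2 by (simp add: field_simps)
          then show ?thesis using n l2 tau_pos by (simp add: field_simps)
        qed
        finally show ?thesis .
      qed
      have T: "real (num_steps \<epsilon> n m) \<ge> 6 / (\<epsilon> * g^2) * real n * ln (real n)"
        unfolding num_steps_def g_def by (rule real_nat_ceiling_ge)
      have "?P \<le> (1 / cc) / (real n)^2"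
        using prob_bound[OF vs[folded g_def] n gp g2 assms d0 d1 T] by (simp add: g_def)
      also have "\<dots> \<le> max (1/cc) (real N0 ^ 2) / (real n)^2"
        using npos by (intro divide_right_mono) auto
      finally show ?thesis .
    qed
  qed
qed

end
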